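(* Let $R$ be an amenable affine algebra over a field $K$ with no zero divisors. Then there exist finite-dimensional $K$-subspaces $\overline{V}_1\subseteq V_1\subseteq\overline{V}_2\subseteq V_2\subseteq\cdots\subseteq R$ such that: (a) for every $r\in R$, $\lim_{n\to\infty}\dim_K(V_nr+V_n)/\dim_K(V_n)=1$; (b) $\lim_{n\to\infty}\dim_K(\overline{V}_n)/\dim_K(V_n)=1$; (c) for every finite-dimensional $K$-subspace $Z\subseteq R$ there exists $k>0$ such that $\overline{V}_n+\overline{V}_nZ\subseteq V_n$ for all $n>k$.
   Context: An affine algebra is a finitely generated associative algebra over $K$, not necessarily unital. For subspaces $V,Z$, $VZ$ denotes the $K$-span of all products $vz$. $R$ is amenable if there exist finite-dimensional $K$-subspaces $W_1\subseteq W_2\subseteq\cdots$ with $\bigcup_nW_n=R$ such that for every $r\in R$, $\lim_{n\to\infty}\dim_K(W_nr+W_n)/\dim_K(W_n)=1$. *)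

theory Defs
  imports Complex_Main
begin

text \<open>A (not necessarily unital) associative algebra over a field: the type 'r carries an
 associative ring structure (class ring, no unit required) and scale makes it a K-vector
 space, with multiplication K-bilinear.\<close>
definition algebra_over :: "('k::field \<Rightarrow> 'r::ring \<Rightarrow> 'r) \<Rightarrow> bool" where
  "algebra_over scale \<longleftrightarrow> vector_space scale \<and>
     (\<forall>a x y. scale a (x * y) = scale a x * y \<and> scale a (x * y) = x * scale a y)"

definition fd_subspace :: "('k::field \<Rightarrow> 'r::ring \<Rightarrow> 'r) \<Rightarrow> 'r set \<Rightarrow> bool" where
  "fd_subspace scale W \<longleftrightarrow> (\<exists>B. finite B \<and> W = module.span scale B)"

definition affine_algebra :: "('k::field \<Rightarrow> 'r::ring \<Rightarrow> 'r) \<Rightarrow> bool" where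
  "affine_algebra scale \<longleftrightarrow> algebra_over scale \<and>
     (\<exists>G. finite G \<and> (\<forall>S. module.subspace scale S \<and> G \<subseteq> S \<and> (\<forall>x\<in>S. \<forall>y\<in>S. x * y \<in> S)
            \<longrightarrow> S = UNIV))"

definition set_prod :: "('k::field \<Rightarrow> 'r::ring \<Rightarrow> 'r) \<Rightarrow> 'r set \<Rightarrow> 'r set \<Rightarrow> 'r set" where
  "set_prod scale V Z = module.span scale {v * z | v z. v \<in> V \<and> z \<in> Z}"

definition set_sum :: "'r::ring set \<Rightarrow> 'r set \<Rightarrow> 'r set" where
  "set_sum A B = {a + b | a b. a \<in> A \<and> b \<in> B}"

definition kdim :: "('k::field \<Rightarrow> 'r::ring \<Rightarrow> 'r) \<Rightarrow> 'r set \<Rightarrow> real" where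
  "kdim scale W = real (vector_space.dim scale W)"

definition amenable :: "('k::field \<Rightarrow> 'r::ring \<Rightarrow> 'r) \<Rightarrow> bool" where
  "amenable scale \<longleftrightarrow> (\<exists>W :: nat \<Rightarrow> 'r set.
     (\<forall>n. fd_subspace scale (W n)) \<and> (\<forall>n. W n \<subseteq> W (Suc n)) \<and> (\<Union>n. W n) = UNIV \<and>
     (\<forall>r. (\<lambda>n. kdim scale (set_sum (set_prod scale (W n) {r}) (W n)) / kdim scale (W n))
             \<longlonglongrightarrow> 1))"

end

theory Submission
  imports Defs
begin

locale alg = vector_space scale for scale :: "'k::field \<Rightarrow> 'r::ring \<Rightarrow> 'r" +
  assumes mulL: "scale a (x * y) = scale a x * y" and mulR: "scale a (x * y) = x * scale a y"
begin

lemma mul_left_span: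
  assumes "x \<in> span A" "\<And>a. a \<in> A \<Longrightarrow> a * y \<in> T" "subspace T"
  shows "x * y \<in> T"
  using assms(1)
proof (induction rule: span_induct_alt)
  case base then show ?case using assms(3) by (simp add: subspace_0)
next
  case (step c a z)
  have "(scale c a + z) * y = scale c (a * y) + z * y" by (simp add: distrib_right mulL)
  then show ?case using step assms by (simp add: subspace_add subspace_scale)
qed

lemma mul_right_span:
  assumes "y \<in> span B" "\<And>b. b \<in> B \<Longrightarrow> x * b \<in> T" "subspace T"
  shows "x * y \<in> T"
  using assms(1)
proof (induction rule: span_induct_alt)
  case base then show ?case using assms(3) by (simp add: subspace_0)
next
  case (step c b z)
  have "x * (scale c b + z) = scale c (x * b) + x * z" by (simp add: distrib_left mulR)
  then show ?case using step assms by (simp add: subspace_add subspace_scale)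
qed

lemma prod_span: "set_prod scale (span A) (span B) = span {a * b | a b. a \<in> A \<and> b \<in> B}"
proof
  show "set_prod scale (span A) (span B) \<subseteq> span {a * b | a b. a \<in> A \<and> b \<in> B}"
    unfolding set_prod_def
  proof (rule span_minimal)
    show "{v * z |v z. v \<in> span A \<and> z \<in> span B} \<subseteq> span {a * b |a b. a \<in> A \<and> b \<in> B}"
    proof clarify
      fix v z assume v: "v \<in> span A" and z: "z \<in> span B"
      show "v * z \<in> span {a * b |a b. a \<in> A \<and> b \<in> B}"
        by (rule mul_left_span[OF v _ subspace_span], rule mul_right_span[OF z _ subspace_span])
           (auto intro: span_base)
    qed
  qed simp
next
  show "span {a * b |a b. a \<in> A \<and> b \<in> B} \<subseteq> set_prod scale (span A) (span B)"
    unfolding set_prod_def by (rule span_mono) (auto intro: span_base)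
qed

lemma prod_span_left: "set_prod scale (span A) B = set_prod scale A B"
proof -
  have "set_prod scale (span A) B = set_prod scale (span A) (span B)"
    unfolding set_prod_def
    apply (rule antisym)
    apply (rule span_mono; auto intro: span_base)
    apply (rule span_minimal)
    apply clarify
    subgoal for v z
      apply (rule mul_right_span[OF _ _ subspace_span], assumption)
      apply (rule span_base) by blast
    by simp
  also have "\<dots> = set_prod scale A B"
    by (simp only: prod_span) (simp add: set_prod_def)
  finally show ?thesis .
qed

lemma prod_span_right: "set_prod scale A (span B) = set_prod scale A B"
proof -
  have "set_prod scale A (span B) = set_prod scale (span A) (span B)"
    unfolding set_prod_def
    apply (rule antisym)
    apply (rule span_mono; auto intro: span_base)
    apply (rule span_minimal)
    apply clarify
    subgoal for v z
      apply (rule mul_left_span[OF _ _ subspace_span], assumption)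
      apply (rule span_base) by blast
    by simp
  also have "\<dots> = set_prod scale A B"
    by (simp only: prod_span) (simp add: set_prod_def)
  finally show ?thesis .
qed

lemma fd_def': "fd_subspace scale W \<longleftrightarrow> (\<exists>B. finite B \<and> W = span B)"
  by (simp add: fd_subspace_def)

lemma fd_sub: "fd_subspace scale W \<Longrightarrow> subspace W"
  by (auto simp: fd_def')

lemma fd_span: "finite B \<Longrightarrow> fd_subspace scale (span B)"
  by (auto simp: fd_def')

lemma basis_fin:
  assumes "B \<subseteq> T" "independent B" "fd_subspace scale T"
  shows "finite B"
proof -
  from assms(3) obtain F where F: "finite F" "T = span F" by (auto simp: fd_def')
  show ?thesis using independent_span_bound[OF F(1) assms(2)] assms(1) F by auto
qed

lemma dim_mono_fd:
  assumes "S \<subseteq> T" "fd_subspace scale T"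
  shows "dim S \<le> dim T"
proof -
  obtain A where A: "A \<subseteq> T" "independent A" "T \<subseteq> span A" "card A = dim T"
    by (rule basis_exists)
  have "finite A" using basis_fin A assms by blast
  then show ?thesis using dim_le_card[of S A] A assms by auto
qed

lemma subspace_set_sum: "subspace A \<Longrightarrow> subspace B \<Longrightarrow> subspace (set_sum A B)"
  unfolding set_sum_def by (rule subspace_sums)

lemma set_sum_span: "set_sum (span A) (span B) = span (A \<union> B)"
  unfolding set_sum_def span_Un ..

lemma fd_set_sum:
  assumes "fd_subspace scale W" "fd_subspace scale Z"
  shows "fd_subspace scale (set_sum W Z)"
proof -
  from assms obtain A B where "finite A" "W = span A" "finite B" "Z = span B" by (auto simp: fd_def')
  then show ?thesis using set_sum_span[of A B] by (auto simp: fd_def' intro!: exI[of _ "A \<union> B"])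
qed

lemma fd_set_prod:
  assumes "fd_subspace scale W" "fd_subspace scale Z"
  shows "fd_subspace scale (set_prod scale W Z)"
proof -
  from assms obtain A B where AB: "finite A" "W = span A" "finite B" "Z = span B" by (auto simp: fd_def')
  have eq: "{a * b | a b. a \<in> A \<and> b \<in> B} = (\<lambda>(a,b). a * b) ` (A \<times> B)" by auto
  have "finite {a * b | a b. a \<in> A \<and> b \<in> B}" unfolding eq using AB by simp
  then show ?thesis using prod_span[of A B] AB by (auto simp: fd_def')
qed

lemma set_sum_sub: "subspace T \<Longrightarrow> A \<subseteq> T \<Longrightarrow> B \<subseteq> T \<Longrightarrow> set_sum A B \<subseteq> T"
  unfolding set_sum_def by (auto intro: subspace_add)

lemma set_prod_sub: "subspace T \<Longrightarrow> (\<And>a b. a \<in> A \<Longrightarrow> b \<in> B \<Longrightarrow> a * b \<in> T) \<Longrightarrow> set_prod scale A B \<subseteq> T"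
  unfolding set_prod_def by (rule span_minimal) auto

lemma set_sum_left: "0 \<in> B \<Longrightarrow> A \<subseteq> set_sum A B"
  unfolding set_sum_def by force

lemma set_sum_right: "0 \<in> A \<Longrightarrow> B \<subseteq> set_sum A B"
  unfolding set_sum_def by force

lemma set_sum_comm: "set_sum A B = set_sum B A"
  unfolding set_sum_def by (auto; metis add.commute)

lemma set_prod_mem: "a \<in> A \<Longrightarrow> b \<in> B \<Longrightarrow> a * b \<in> set_prod scale A B"
  unfolding set_prod_def by (rule span_base) blast

lemma set_prod_subspace: "subspace (set_prod scale A B)"
  unfolding set_prod_def by simp

lemma set_prod_mono: "A \<subseteq> A' \<Longrightarrow> B \<subseteq> B' \<Longrightarrow> set_prod scale A B \<subseteq> set_prod scale A' B'"
  unfolding set_prod_def by (rule span_mono) blast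

lemma set_sum_mono: "A \<subseteq> A' \<Longrightarrow> B \<subseteq> B' \<Longrightarrow> set_sum A B \<subseteq> set_sum A' B'"
  unfolding set_sum_def by blast

lemma submod:
  assumes W: "subspace W" and X: "fd_subspace scale X" and Y: "fd_subspace scale Y"
    and WX: "W \<subseteq> X" and WY: "W \<subseteq> Y"
  shows "dim (set_sum X Y) + dim W \<le> dim X + dim Y"
proof -
  obtain BW where BW: "BW \<subseteq> W" "independent BW" "W \<subseteq> span BW" "card BW = dim W"
    by (rule basis_exists)
  obtain BX where BX: "BW \<subseteq> BX" "BX \<subseteq> X" "independent BX" "X \<subseteq> span BX"
    using maximal_independent_subset_extend[of BW X] BW WX by blast
  obtain BY where BY: "BW \<subseteq> BY" "BY \<subseteq> Y" "independent BY" "Y \<subseteq> span BY"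
    using maximal_independent_subset_extend[of BW Y] BW WY by blast
  have cX: "card BX = dim X" using basis_card_eq_dim BX by blast
  have cY: "card BY = dim Y" using basis_card_eq_dim BY by blast
  have fX: "finite BX" using basis_fin BX X by blast
  have fY: "finite BY" using basis_fin BY Y by blast
  have "set_sum X Y \<subseteq> span (BX \<union> BY)"
    by (rule set_sum_sub) (use BX BY span_mono[of BX "BX \<union> BY"] span_mono[of BY "BX \<union> BY"] in auto)
  then have "dim (set_sum X Y) \<le> card (BX \<union> BY)" using dim_le_card fX fY by blast
  moreover have "card (BX \<union> BY) + card (BX \<inter> BY) = card BX + card BY"
    using card_Un_Int[OF fX fY] by simp
  moreover have "card BW \<le> card (BX \<inter> BY)" using BX BY fX by (intro card_mono) auto
  ultimately show ?thesis using cX cY BW by linarith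
qed

lemma folner_single:
  assumes Wfd: "\<And>n. fd_subspace scale (W n)"
    and lim: "(\<lambda>n. kdim scale (set_sum (set_prod scale (W n) {r}) (W n)) / kdim scale (W n)) \<longlonglongrightarrow> 1"
    and e: "e > 0"
  shows "eventually (\<lambda>m. real (dim (set_sum (W m) (set_prod scale (W m) (span {r}))))
           \<le> (1 + e) * real (dim (W m)) \<and> dim (W m) > 0) sequentially"
proof -
  have ev1: "eventually (\<lambda>m. 1/2 < kdim scale (set_sum (set_prod scale (W m) {r}) (W m)) / kdim scale (W m)) sequentially"
    by (rule order_tendstoD(1)[OF lim]) simp
  have ev2: "eventually (\<lambda>m. kdim scale (set_sum (set_prod scale (W m) {r}) (W m)) / kdim scale (W m) < 1 + e) sequentially"
    by (rule order_tendstoD(2)[OF lim]) (use e in simp)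
  show ?thesis
  proof (rule eventually_mono[OF eventually_conj[OF ev1 ev2]], clarify)
    fix m
    let ?N = "real (dim (set_sum (set_prod scale (W m) {r}) (W m)))"
    let ?D = "real (dim (W m))"
    assume a1: "1/2 < kdim scale (set_sum (set_prod scale (W m) {r}) (W m)) / kdim scale (W m)"
      and a2: "kdim scale (set_sum (set_prod scale (W m) {r}) (W m)) / kdim scale (W m) < 1 + e"
    have a1': "1/2 < ?N / ?D" and a2': "?N / ?D < 1 + e" using a1 a2 by (simp_all add: kdim_def)
    have D: "?D > 0"
    proof (rule ccontr)
      assume "\<not> ?D > 0" then have "?D = 0" by simp
      then show False using a1' by simp
    qed
    have "?N < (1 + e) * ?D" using a2' D by (simp add: divide_less_eq)
    moreover have "set_sum (W m) (set_prod scale (W m) (span {r})) = set_sum (set_prod scale (W m) {r}) (W m)"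
      by (simp add: prod_span_right set_sum_comm)
    ultimately show "real (dim (set_sum (W m) (set_prod scale (W m) (span {r})))) \<le> (1 + e) * ?D \<and> 0 < dim (W m)"
      using D by simp
  qed
qed

lemma folner:
  assumes Wfd: "\<And>n. fd_subspace scale (W n)"
    and lim: "\<And>r. (\<lambda>n. kdim scale (set_sum (set_prod scale (W n) {r}) (W n)) / kdim scale (W n)) \<longlonglongrightarrow> 1"
    and B: "finite B"
  shows "\<forall>e>0. eventually (\<lambda>m. real (dim (set_sum (W m) (set_prod scale (W m) (span B))))
           \<le> (1 + e) * real (dim (W m))) sequentially"
  using B
proof (induction B rule: finite_induct)
  case empty
  show ?case
  proof (intro allI impI always_eventually allI)
    fix e :: real and m assume e: "e > 0"
    have "set_sum (W m) (set_prod scale (W m) (span {})) \<subseteq> W m"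
      using fd_sub[OF Wfd[of m]]
      by (intro set_sum_sub set_prod_sub) (auto simp: subspace_0)
    then have "dim (set_sum (W m) (set_prod scale (W m) (span {}))) \<le> dim (W m)"
      using dim_mono_fd Wfd by blast
    then show "real (dim (set_sum (W m) (set_prod scale (W m) (span {})))) \<le> (1 + e) * real (dim (W m))"
      using e by (simp add: algebra_simps) (smt (verit) of_nat_0_le_iff of_nat_le_iff mult_nonneg_nonneg)
  qed
next
  case (insert b B)
  show ?case
  proof (intro allI impI)
    fix e :: real assume e: "e > 0"
    have e2: "e/2 > 0" using e by simp
    show "eventually (\<lambda>m. real (dim (set_sum (W m) (set_prod scale (W m) (span (insert b B)))))
           \<le> (1 + e) * real (dim (W m))) sequentially"
    proof (rule eventually_mono[OF eventually_conj[OF insert.IH[rule_format, OF e2] folner_single[OF Wfd lim e2]]])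
      fix m
      let ?W = "W m"
      let ?EB = "set_sum ?W (set_prod scale ?W (span B))"
      let ?Eb = "set_sum ?W (set_prod scale ?W (span {b}))"
      let ?E = "set_sum ?W (set_prod scale ?W (span (insert b B)))"
      assume h: "real (dim ?EB) \<le> (1 + e/2) * real (dim ?W) \<and>
          real (dim ?Eb) \<le> (1 + e/2) * real (dim ?W) \<and> 0 < dim ?W"
      have sW: "subspace ?W" using fd_sub Wfd by blast
      have fW: "fd_subspace scale ?W" using Wfd by blast
      have fEB: "fd_subspace scale ?EB"
        by (intro fd_set_sum fd_set_prod fW fd_span insert.hyps)
      have fEb: "fd_subspace scale ?Eb"
        by (intro fd_set_sum fd_set_prod fW fd_span) simp
      have WEB: "?W \<subseteq> ?EB" by (rule set_sum_left) (simp add: set_prod_subspace subspace_0)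
      have WEb: "?W \<subseteq> ?Eb" by (rule set_sum_left) (simp add: set_prod_subspace subspace_0)
      have sS: "subspace (set_sum ?EB ?Eb)"
        using fEB fEb by (intro subspace_set_sum fd_sub)
      have EB_S: "?EB \<subseteq> set_sum ?EB ?Eb" by (rule set_sum_left) (use fEb fd_sub subspace_0 in blast)
      have Eb_S: "?Eb \<subseteq> set_sum ?EB ?Eb" by (rule set_sum_right) (use fEB fd_sub subspace_0 in blast)
      have "?E \<subseteq> set_sum ?EB ?Eb"
      proof (rule set_sum_sub[OF sS])
        show "?W \<subseteq> set_sum ?EB ?Eb" using WEB EB_S by blast
        show "set_prod scale ?W (span (insert b B)) \<subseteq> set_sum ?EB ?Eb"
          unfolding prod_span_right[of ?W "insert b B"]
        proof (rule set_prod_sub[OF sS])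
          fix w z assume w: "w \<in> ?W" and z: "z \<in> insert b B"
          show "w * z \<in> set_sum ?EB ?Eb"
          proof (cases "z = b")
            case True
            have "w * z \<in> set_prod scale ?W (span {b})"
              using True w by (intro set_prod_mem) (auto intro: span_base)
            then have "w * z \<in> ?Eb" using set_sum_right[of ?W] sW subspace_0 by blast
            then show ?thesis using Eb_S by blast
          next
            case False
            then have "w * z \<in> set_prod scale ?W (span B)"
              using z w by (intro set_prod_mem) (auto intro: span_base)
            then have "w * z \<in> ?EB" using set_sum_right[of ?W] sW subspace_0 by blast
            then show ?thesis using EB_S by blast
          qed
        qed
      qed
      then have "dim ?E \<le> dim (set_sum ?EB ?Eb)"
        using dim_mono_fd fd_set_sum fEB fEb by blast
      moreover have "dim (set_sum ?EB ?Eb) + dim ?W \<le> dim ?EB + dim ?Eb"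
        by (rule submod[OF sW fEB fEb WEB WEb])
      ultimately have "real (dim ?E) + real (dim ?W) \<le> real (dim ?EB) + real (dim ?Eb)"
        by linarith
      then show "real (dim ?E) \<le> (1 + e) * real (dim ?W)"
        using h by (simp add: algebra_simps)
    qed
  qed
qed

lemma delta_lim: "(\<lambda>n. 1 / (real n + 1)) \<longlonglongrightarrow> 0"
  using LIMSEQ_inverse_real_of_nat by (simp add: inverse_eq_divide add.commute)

lemma delta_lim1: "(\<lambda>n. 1 + 1 / (real n + 1)) \<longlonglongrightarrow> 1"
  using tendsto_add[OF tendsto_const[of 1] delta_lim] by simp

lemma delta_lim2: "(\<lambda>n. 1 / (1 + 1 / (real n + 1))) \<longlonglongrightarrow> 1"
  using tendsto_divide[OF tendsto_const[of 1] delta_lim1] by simp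

lemma exhaust_fin:
  assumes mono: "\<And>n. W n \<subseteq> W (Suc n)" and un: "(\<Union>n. W n) = UNIV" and F: "finite F"
  shows "\<exists>k. F \<subseteq> W k"
  using F
proof (induction F rule: finite_induct)
  case empty then show ?case by blast
next
  case (insert x F)
  then obtain k1 where k1: "F \<subseteq> W k1" by blast
  obtain k2 where k2: "x \<in> W k2" using un by blast
  have "W k1 \<subseteq> W (max k1 k2)" "W k2 \<subseteq> W (max k1 k2)"
    using lift_Suc_mono_le[of W, OF mono] by auto
  then show ?case using k1 k2 by blast
qed

lemma exhaust:
  assumes Wfd: "\<And>n. fd_subspace scale (W n)"
    and mono: "\<And>n. W n \<subseteq> W (Suc n)" and un: "(\<Union>n. W n) = UNIV" and Z: "fd_subspace scale Z"
  shows "\<exists>k. \<forall>n\<ge>k. Z \<subseteq> W n"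
proof -
  obtain F where F: "finite F" "Z = span F" using Z by (auto simp: fd_def')
  obtain k where k: "F \<subseteq> W k" using exhaust_fin[OF mono un F(1)] by blast
  have "\<forall>n\<ge>k. Z \<subseteq> W n"
  proof (intro allI impI)
    fix n assume "k \<le> n"
    then have "F \<subseteq> W n" using k lift_Suc_mono_le[of W, OF mono] by blast
    then show "Z \<subseteq> W n" using F span_minimal fd_sub[OF Wfd] by blast
  qed
  then show ?thesis by blast
qed

lemma main:
  assumes Wfd: "\<And>n. fd_subspace scale (W n)"
    and mono: "\<And>n. W n \<subseteq> W (Suc n)" and un: "(\<Union>n. W n) = UNIV"
    and lim: "\<And>r. (\<lambda>n. kdim scale (set_sum (set_prod scale (W n) {r}) (W n)) / kdim scale (W n)) \<longlonglongrightarrow> 1"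
  shows "\<exists>V Vb :: nat \<Rightarrow> 'r set.
     (\<forall>n. fd_subspace scale (V n) \<and> fd_subspace scale (Vb n)) \<and>
     (\<forall>n. Vb n \<subseteq> V n \<and> V n \<subseteq> Vb (Suc n)) \<and>
     (\<forall>r. (\<lambda>n. kdim scale (set_sum (set_prod scale (V n) {r}) (V n)) / kdim scale (V n))
             \<longlonglongrightarrow> 1) \<and>
     (\<lambda>n. kdim scale (Vb n) / kdim scale (V n)) \<longlonglongrightarrow> 1 \<and>
     (\<forall>Z. fd_subspace scale Z \<longrightarrow>
        (\<exists>k>0. \<forall>n>k. set_sum (Vb n) (set_prod scale (Vb n) Z) \<subseteq> V n))"
proof -
  define E where "E A Z = set_sum A (set_prod scale A Z)" for A Z
  define Y where "Y n = E (W n) (W n)" for n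
  define d where "d n = 1 / (real n + 1)" for n
  have fdE: "fd_subspace scale (E A Z)" if "fd_subspace scale A" "fd_subspace scale Z" for A Z
    unfolding E_def using that by (intro fd_set_sum fd_set_prod)
  have fdY: "fd_subspace scale (Y n)" for n unfolding Y_def using Wfd by (intro fdE)
  have subE: "subspace (E A Z)" if "fd_subspace scale A" "fd_subspace scale Z" for A Z
    using fdE[OF that] fd_sub by blast
  have AE: "A \<subseteq> E A Z" for A Z
    unfolding E_def by (rule set_sum_left) (simp add: set_prod_subspace subspace_0)
  have WY: "W n \<subseteq> Y n" for n unfolding Y_def by (rule AE)
  have Emono: "E A Z \<subseteq> E A Z'" if "Z \<subseteq> Z'" for A Z Z'
    unfolding E_def using that by (intro set_sum_mono set_prod_mono) auto
  have "\<forall>n. \<exists>B. finite B \<and> Y n = span B" using fdY by (simp add: fd_def')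
  then obtain YB where YB: "\<And>n. finite (YB n)" "\<And>n. Y n = span (YB n)" by metis
  define Q where "Q n m \<longleftrightarrow> real (dim (E (W m) (Y n))) \<le> (1 + d n) * real (dim (W m)) \<and> dim (W m) > 0"
    for n m
  define C where "C p n m \<longleftrightarrow> E (W p) (W n) \<subseteq> W m" for p n m
  have exQ: "\<exists>m. Q n' m \<and> C p n m" for n' n p
  proof -
    have dpos: "d n' > 0" by (simp add: d_def)
    have e1: "eventually (\<lambda>m. real (dim (E (W m) (Y n'))) \<le> (1 + d n') * real (dim (W m))) sequentially"
      using folner[OF Wfd lim YB(1)[of n']] dpos by (simp add: E_def YB(2))
    have e2: "eventually (\<lambda>m. dim (W m) > 0) sequentially"
      using folner_single[OF Wfd lim[of 0] dpos] by (rule eventually_mono) simp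
    obtain k where k: "\<forall>m\<ge>k. E (W p) (W n) \<subseteq> W m"
      using exhaust[OF Wfd mono un fdE[OF Wfd Wfd]] by blast
    have e3: "eventually (\<lambda>m. C p n m) sequentially"
      unfolding C_def eventually_sequentially using k by blast
    have "eventually (\<lambda>m. Q n' m \<and> C p n m) sequentially"
      unfolding Q_def using e1 e2 e3 by eventually_elim auto
    then show ?thesis using eventually_happens' sequentially_bot by blast
  qed
  define mm where "mm = rec_nat (SOME m. Q 0 m) (\<lambda>n p. SOME m. Q (Suc n) m \<and> C p n m)"
  have mm0: "mm 0 = (SOME m. Q 0 m)" and mmS: "mm (Suc n) = (SOME m. Q (Suc n) m \<and> C (mm n) n m)" for n
    by (simp_all add: mm_def)
  have Qmm: "Q n (mm n)" for n
  proof (cases n)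
    case 0 then show ?thesis using exQ[of 0 0 0] by (simp add: mm0) (rule someI_ex, blast)
  next
    case (Suc k)
    show ?thesis unfolding Suc mmS using someI_ex[OF exQ[of "Suc k" "mm k" k]] by blast
  qed
  have Cmm: "C (mm n) n (mm (Suc n))" for n
    unfolding mmS using someI_ex[OF exQ[of "Suc n" "mm n" n]] by blast
  define V where "V n = E (W (mm n)) (W n)" for n
  define Vb where "Vb n = W (mm n)" for n
  have fdV: "fd_subspace scale (V n)" for n unfolding V_def using Wfd by (intro fdE)
  have fdVb: "fd_subspace scale (Vb n)" for n unfolding Vb_def using Wfd by blast
  have VbV: "Vb n \<subseteq> V n" for n unfolding V_def Vb_def by (rule AE)
  have VVb: "V n \<subseteq> Vb (Suc n)" for n using Cmm[of n] unfolding V_def Vb_def C_def .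
  have VEY: "V n \<subseteq> E (W (mm n)) (Y n)" for n unfolding V_def by (rule Emono[OF WY])
  have fdEY: "fd_subspace scale (E (W (mm n)) (Y n))" for n using Wfd fdY by (intro fdE)
  have dW_pos: "real (dim (Vb n)) > 0" for n using Qmm[of n] by (simp add: Q_def Vb_def)
  have dWV: "real (dim (Vb n)) \<le> real (dim (V n))" for n using dim_mono_fd[OF VbV fdV] by simp
  have dVE: "real (dim (V n)) \<le> real (dim (E (W (mm n)) (Y n)))" for n
    using dim_mono_fd[OF VEY fdEY] by simp
  have dE: "real (dim (E (W (mm n)) (Y n))) \<le> (1 + d n) * real (dim (Vb n))" for n
    using Qmm[of n] by (simp add: Q_def Vb_def)
  have dpos: "d n > 0" for n by (simp add: d_def)
  have dV_pos: "real (dim (V n)) > 0" for n using dW_pos[of n] dWV[of n] by linarith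
  have partb: "(\<lambda>n. kdim scale (Vb n) / kdim scale (V n)) \<longlonglongrightarrow> 1"
  proof (rule tendsto_sandwich[OF _ _ delta_lim2 tendsto_const])
    show "\<forall>\<^sub>F n in sequentially. 1 / (1 + 1 / (real n + 1)) \<le> kdim scale (Vb n) / kdim scale (V n)"
    proof (rule always_eventually, rule allI)
      fix n
      have h: "real (dim (V n)) \<le> (1 + d n) * real (dim (Vb n))" using dVE[of n] dE[of n] by linarith
      have "1 / (1 + d n) \<le> real (dim (Vb n)) / real (dim (V n))"
        using h dV_pos[of n] dpos[of n] by (simp add: field_simps)
      then show "1 / (1 + 1 / (real n + 1)) \<le> kdim scale (Vb n) / kdim scale (V n)"
        by (simp add: kdim_def d_def)
    qed
    show "\<forall>\<^sub>F n in sequentially. kdim scale (Vb n) / kdim scale (V n) \<le> 1"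
      using dWV dV_pos by (intro always_eventually allI) (simp add: kdim_def)
  qed
  have parta: "(\<lambda>n. kdim scale (set_sum (set_prod scale (V n) {r}) (V n)) / kdim scale (V n)) \<longlonglongrightarrow> 1" for r
  proof -
    obtain k where k: "\<forall>n\<ge>k. span {r} \<subseteq> W n"
      using exhaust[OF Wfd mono un fd_span[of "{r}"]] by auto
    have rW: "r \<in> W n" if "n \<ge> k" for n using k that span_base[of r "{r}"] by blast
    let ?S = "\<lambda>n. set_sum (set_prod scale (V n) {r}) (V n)"
    have SE: "?S n \<subseteq> E (W (mm n)) (Y n)" if "n \<ge> k" for n
    proof (rule set_sum_sub[OF subE[OF Wfd fdY] _ VEY])
      let ?W' = "W (mm n)"
      have sW': "subspace ?W'" using fd_sub Wfd by blast
      have PT: "set_prod scale ?W' (Y n) \<subseteq> E ?W' (Y n)"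
        unfolding E_def by (rule set_sum_right) (use sW' subspace_0 in blast)
      show "set_prod scale (V n) {r} \<subseteq> E ?W' (Y n)"
      proof (rule set_prod_sub[OF subE[OF Wfd fdY]])
        fix v b assume v: "v \<in> V n" and b: "b \<in> {r}"
        then have b: "b = r" by simp
        from v obtain a p where ap: "v = a + p" "a \<in> ?W'" "p \<in> set_prod scale ?W' (W n)"
          unfolding V_def E_def set_sum_def by blast
        have "a * r \<in> set_prod scale ?W' (Y n)"
          using ap(2) rW[OF that] WY by (intro set_prod_mem) auto
        moreover have "p * r \<in> set_prod scale ?W' (Y n)"
        proof (rule mul_left_span[OF _ _ set_prod_subspace])
          show "p \<in> span {w * x | w x. w \<in> ?W' \<and> x \<in> W n}" using ap(3) by (simp add: set_prod_def)
          fix q assume "q \<in> {w * x | w x. w \<in> ?W' \<and> x \<in> W n}"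
          then obtain w x where q: "q = w * x" "w \<in> ?W'" "x \<in> W n" by blast
          have "x * r \<in> set_prod scale (W n) (W n)" using q(3) rW[OF that] by (intro set_prod_mem)
          then have "x * r \<in> Y n" unfolding Y_def E_def
            using set_sum_right[of "W n" "set_prod scale (W n) (W n)"] fd_sub[OF Wfd] subspace_0 by blast
          then have "w * (x * r) \<in> set_prod scale ?W' (Y n)" using q(2) by (intro set_prod_mem)
          then show "q * r \<in> set_prod scale ?W' (Y n)" by (simp add: q(1) mult.assoc)
        qed
        ultimately have "a * r + p * r \<in> set_prod scale ?W' (Y n)"
          using set_prod_subspace subspace_add by blast
        then show "v * b \<in> E ?W' (Y n)" using PT by (auto simp: b ap(1) distrib_right)
      qed
    qed
    have fdS: "fd_subspace scale (?S n)" for n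
    proof -
      have "set_prod scale (V n) {r} = set_prod scale (V n) (span {r})" by (simp add: prod_span_right)
      then show ?thesis using fdV by (metis fd_set_sum fd_set_prod fd_span finite.emptyI finite.insertI)
    qed
    show ?thesis
    proof (rule tendsto_sandwich[OF _ _ tendsto_const delta_lim1])
      show "\<forall>\<^sub>F n in sequentially. 1 \<le> kdim scale (?S n) / kdim scale (V n)"
      proof (rule always_eventually, rule allI)
        fix n
        have "V n \<subseteq> ?S n" by (rule set_sum_right) (simp add: set_prod_subspace subspace_0)
        then have "real (dim (V n)) \<le> real (dim (?S n))" using dim_mono_fd[OF _ fdS] by simp
        then show "1 \<le> kdim scale (?S n) / kdim scale (V n)" using dV_pos[of n] by (simp add: kdim_def)
      qed
      show "\<forall>\<^sub>F n in sequentially. kdim scale (?S n) / kdim scale (V n) \<le> 1 + 1 / (real n + 1)"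
        unfolding eventually_sequentially
      proof (intro exI allI impI)
        fix n assume "k \<le> n"
        have "real (dim (?S n)) \<le> real (dim (E (W (mm n)) (Y n)))"
          using dim_mono_fd[OF SE[OF \<open>k \<le> n\<close>] fdEY] by simp
        also have "\<dots> \<le> (1 + d n) * real (dim (Vb n))" by (rule dE)
        also have "\<dots> \<le> (1 + d n) * real (dim (V n))" using dWV[of n] dpos[of n] by simp
        finally show "kdim scale (?S n) / kdim scale (V n) \<le> 1 + 1 / (real n + 1)"
          using dV_pos[of n] by (simp add: kdim_def d_def divide_le_eq)
      qed
    qed
  qed
  have partc: "\<exists>k>0. \<forall>n>k. set_sum (Vb n) (set_prod scale (Vb n) Z) \<subseteq> V n"
    if Z: "fd_subspace scale Z" for Z
  proof -
    obtain k where k: "\<forall>n\<ge>k. Z \<subseteq> W n" using exhaust[OF Wfd mono un Z] by blast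
    have "\<forall>n>Suc k. set_sum (Vb n) (set_prod scale (Vb n) Z) \<subseteq> V n"
    proof (intro allI impI)
      fix n assume "n > Suc k"
      then have "Z \<subseteq> W n" using k by simp
      then show "set_sum (Vb n) (set_prod scale (Vb n) Z) \<subseteq> V n"
        using Emono[of Z "W n" "W (mm n)"] unfolding V_def Vb_def E_def by blast
    qed
    then show ?thesis by blast
  qed
  show ?thesis
    apply (rule exI[of _ V], rule exI[of _ Vb])
    using fdV fdVb VbV VVb parta partb partc by blast
qed

end

theorem lemma3:
  fixes scale :: "'k::field \<Rightarrow> 'r::ring \<Rightarrow> 'r"
  assumes "affine_algebra scale"
    and "amenable scale"
    and "\<forall>x y :: 'r. x * y = 0 \<longrightarrow> x = 0 \<or> y = 0"
  shows "\<exists>V Vb :: nat \<Rightarrow> 'r set.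
     (\<forall>n. fd_subspace scale (V n) \<and> fd_subspace scale (Vb n)) \<and>
     (\<forall>n. Vb n \<subseteq> V n \<and> V n \<subseteq> Vb (Suc n)) \<and>
     (\<forall>r. (\<lambda>n. kdim scale (set_sum (set_prod scale (V n) {r}) (V n)) / kdim scale (V n))
             \<longlonglongrightarrow> 1) \<and>
     (\<lambda>n. kdim scale (Vb n) / kdim scale (V n)) \<longlonglongrightarrow> 1 \<and>
     (\<forall>Z. fd_subspace scale Z \<longrightarrow>
        (\<exists>k>0. \<forall>n>k. set_sum (Vb n) (set_prod scale (Vb n) Z) \<subseteq> V n))"
proof -
  have ao: "algebra_over scale" using assms(1) by (simp add: affine_algebra_def)
  interpret A: alg scale
    using ao unfolding algebra_over_def alg_def alg_axioms_def by blast
  obtain W :: "nat \<Rightarrow> 'r set" where W: "\<forall>n. fd_subspace scale (W n)" "\<forall>n. W n \<subseteq> W (Suc n)"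
    "(\<Union>n. W n) = UNIV"
    "\<forall>r. (\<lambda>n. kdim scale (set_sum (set_prod scale (W n) {r}) (W n)) / kdim scale (W n)) \<longlonglongrightarrow> 1"
    using assms(2) unfolding amenable_def by blast
  show ?thesis by (rule A.main[of W]) (use W in auto)
qed

end
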